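(* For an integer $R\ge 2$ and $n\ge1$, let $\ket{\psi_R^n}=c\sum_{k=0}^{R-1}R_y\!\big(\tfrac{2\pi k}{R}\big)^{\otimes n}\ket{0}^{\otimes n}$, where $c>0$ is the normalization constant (defined whenever the sum is nonzero, which holds for all sufficiently large $n$). Then $\lim_{n\to\infty}\mathcal{C}(\ket{\psi_R^n})=\frac{R-1}{R}$, and there exists $n_0$ such that $\mathrm{rk}(\ket{\psi_R^n})=R$ for all $n\ge n_0$.
   Context: $R_y(\theta)=\exp(-i\theta\sigma_y/2)$ is the single-qubit rotation with $R_y(\theta)\ket{0}=\cos(\theta/2)\ket{0}+\sin(\theta/2)\ket{1}$. The CP rank $\mathrm{rk}(\ket{\psi})$ is the minimal $r$ with $\ket{\psi}=\sum_{i=1}^r c_i\bigotimes_{j=1}^n\ket{\phi_i^{(j)}}$. The concentratable entanglement is $\mathcal{C}(\ket{\psi})=1-\frac{1}{2^{n}}\sum_{\alpha\subseteq [n]}\mathrm{Tr}[\rho_\alpha^2]$, with $\rho_\alpha$ the reduced state on $\alpha$ and $\mathrm{Tr}[\rho_\emptyset^2]=1$. *)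

theory Defs
  imports "HOL-Analysis.Analysis"
begin

text \<open>An n-qubit state is represented by its amplitude function on the computational
  basis. A basis vector |x_0 ... x_{n-1}> is encoded by the set of qubit positions
  j < n with x_j = 1, i.e. by a subset of {..<n}. Values outside Pow {..<n} are ignored.\<close>

type_synonym qstate = "nat set \<Rightarrow> complex"

text \<open>Amplitudes of R_y(theta)|0> = cos(theta/2)|0> + sin(theta/2)|1>; True means |1>.\<close>
definition Ry0 :: "real \<Rightarrow> bool \<Rightarrow> real" where
  "Ry0 \<theta> b = (if b then sin (\<theta> / 2) else cos (\<theta> / 2))"

definition psi_unnorm :: "nat \<Rightarrow> nat \<Rightarrow> nat set \<Rightarrow> real" where
  "psi_unnorm R n x = (\<Sum>k<R. \<Prod>j<n. Ry0 (2 * pi * real k / real R) (j \<in> x))"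

definition norm_const :: "nat \<Rightarrow> nat \<Rightarrow> real" where
  "norm_const R n = 1 / sqrt (\<Sum>x\<in>Pow {..<n}. (psi_unnorm R n x)\<^sup>2)"

definition psiR :: "nat \<Rightarrow> nat \<Rightarrow> qstate" where
  "psiR R n x = complex_of_real (norm_const R n * psi_unnorm R n x)"

definition reduced_dm :: "nat \<Rightarrow> qstate \<Rightarrow> nat set \<Rightarrow> nat set \<Rightarrow> nat set \<Rightarrow> complex" where
  "reduced_dm n \<psi> \<alpha> a a' = (\<Sum>b\<in>Pow ({..<n} - \<alpha>). \<psi> (a \<union> b) * cnj (\<psi> (a' \<union> b)))"

definition purity :: "nat \<Rightarrow> qstate \<Rightarrow> nat set \<Rightarrow> complex" where
  "purity n \<psi> \<alpha> = (if \<alpha> = {} then 1 else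
     (\<Sum>a\<in>Pow \<alpha>. \<Sum>a'\<in>Pow \<alpha>. reduced_dm n \<psi> \<alpha> a a' * reduced_dm n \<psi> \<alpha> a' a))"

definition conc_ent :: "nat \<Rightarrow> qstate \<Rightarrow> real" where
  "conc_ent n \<psi> = 1 - (1 / 2 ^ n) * Re (\<Sum>\<alpha>\<in>Pow {..<n}. purity n \<psi> \<alpha>)"

definition has_cp_decomp :: "nat \<Rightarrow> qstate \<Rightarrow> nat \<Rightarrow> bool" where
  "has_cp_decomp n \<psi> r \<longleftrightarrow>
     (\<exists>c :: nat \<Rightarrow> complex. \<exists>\<phi> :: nat \<Rightarrow> nat \<Rightarrow> bool \<Rightarrow> complex.
        \<forall>x\<in>Pow {..<n}. \<psi> x = (\<Sum>i<r. c i * (\<Prod>j<n. \<phi> i j (j \<in> x))))"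

definition cp_rank :: "nat \<Rightarrow> qstate \<Rightarrow> nat" where
  "cp_rank n \<psi> = (LEAST r. has_cp_decomp n \<psi> r)"

end

theory Submission
  imports Defs "Jordan_Normal_Form.Determinant"
begin

lemma L1:
  fixes f :: "'a \<Rightarrow> bool \<Rightarrow> 'c :: comm_semiring_1"
  assumes "finite I"
  shows "(\<Sum>x\<in>Pow I. \<Prod>j\<in>I. f j (j \<in> x)) = (\<Prod>j\<in>I. f j False + f j True)"
proof -
  have "(\<Prod>j\<in>I. f j False + f j True) = (\<Prod>j\<in>I. f j True + f j False)" by (simp add: add.commute)
  also have "\<dots> = (\<Sum>X\<in>Pow I. (\<Prod>j\<in>X. f j True) * (\<Prod>j\<in>I-X. f j False))"
    by (rule prod_add[OF assms])
  also have "\<dots> = (\<Sum>x\<in>Pow I. \<Prod>j\<in>I. f j (j \<in> x))"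
  proof (rule sum.cong)
    fix X assume X: "X \<in> Pow I"
    have "(\<Prod>j\<in>I. f j (j \<in> X)) = (\<Prod>j\<in>I. if j \<in> X then f j True else f j False)"
      by (rule prod.cong) auto
    also have "\<dots> = (\<Prod>j\<in>I \<inter> {j. j \<in> X}. f j True) * (\<Prod>j\<in>I \<inter> - {j. j \<in> X}. f j False)"
      by (rule prod.If_cases[OF assms])
    also have "I \<inter> {j. j \<in> X} = X" using X by auto
    also have "I \<inter> - {j. j \<in> X} = I - X" by auto
    finally show "(\<Prod>j\<in>X. f j True) * (\<Prod>j\<in>I-X. f j False) = (\<Prod>j\<in>I. f j (j \<in> X))" by simp
  qed simp
  finally show ?thesis by simp
qed

lemma L2:
  fixes f :: "'a \<Rightarrow> bool \<Rightarrow> 'c :: comm_semiring_1"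
  assumes "finite I" "J \<subseteq> I"
  shows "(\<Sum>b\<in>Pow J. \<Prod>j\<in>I. f j (j \<in> b)) =
         (\<Prod>j\<in>I. if j \<in> J then f j False + f j True else f j False)"
proof -
  have fJ: "finite J" using assms finite_subset by blast
  have split: "\<And>g :: 'a \<Rightarrow> 'c. prod g I = prod g J * prod g (I - J)"
    using assms by (metis prod.subset_diff mult.commute)
  have "(\<Sum>b\<in>Pow J. \<Prod>j\<in>I. f j (j \<in> b)) =
        (\<Sum>b\<in>Pow J. (\<Prod>j\<in>J. f j (j \<in> b)) * (\<Prod>j\<in>I - J. f j False))"
  proof (rule sum.cong)
    fix b assume b: "b \<in> Pow J"
    have "(\<Prod>j\<in>I - J. f j (j \<in> b)) = (\<Prod>j\<in>I - J. f j False)"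
    proof (intro prod.cong refl)
      fix j assume "j \<in> I - J" hence "j \<notin> b" using b by auto
      thus "f j (j \<in> b) = f j False" by simp
    qed
    thus "(\<Prod>j\<in>I. f j (j \<in> b)) = (\<Prod>j\<in>J. f j (j \<in> b)) * (\<Prod>j\<in>I - J. f j False)"
      by (simp add: split)
  qed simp
  also have "\<dots> = (\<Prod>j\<in>J. f j False + f j True) * (\<Prod>j\<in>I - J. f j False)"
    by (simp add: L1[OF fJ] flip: sum_distrib_right)
  also have "\<dots> = (\<Prod>j\<in>I. if j \<in> J then f j False + f j True else f j False)"
  proof -
    have "(\<Prod>j\<in>J. f j False + f j True) = (\<Prod>j\<in>J. if j \<in> J then f j False + f j True else f j False)"
      by (rule prod.cong) auto
    moreover have "(\<Prod>j\<in>I - J. f j False) = (\<Prod>j\<in>I - J. if j \<in> J then f j False + f j True else f j False)"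
      by (rule prod.cong) auto
    ultimately show ?thesis by (simp add: split)
  qed
  finally show ?thesis .
qed

definition vv :: "nat \<Rightarrow> nat \<Rightarrow> bool \<Rightarrow> real" where
  "vv R k b = Ry0 (2 * pi * real k / real R) b"

definition GG :: "nat \<Rightarrow> nat \<Rightarrow> nat \<Rightarrow> real" where
  "GG R k l = vv R k False * vv R l False + vv R k True * vv R l True"

lemma psi_unnorm_vv: "psi_unnorm R n x = (\<Sum>k<R. \<Prod>j<n. vv R k (j \<in> x))"
  by (simp add: psi_unnorm_def vv_def)

lemma norm_sum:
  "(\<Sum>x\<in>Pow {..<n}. (psi_unnorm R n x)\<^sup>2) = (\<Sum>k<R. \<Sum>l<R. GG R k l ^ n)"
proof -
  have "(\<Sum>x\<in>Pow {..<n}. (psi_unnorm R n x)\<^sup>2) =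
        (\<Sum>x\<in>Pow {..<n}. \<Sum>k<R. \<Sum>l<R. \<Prod>j<n. vv R k (j \<in> x) * vv R l (j \<in> x))"
    by (simp add: psi_unnorm_vv power2_eq_square sum_product prod.distrib)
  also have "\<dots> = (\<Sum>k<R. \<Sum>l<R. \<Sum>x\<in>Pow {..<n}. \<Prod>j<n. vv R k (j \<in> x) * vv R l (j \<in> x))"
    by (simp add: sum.swap[of _ "Pow _"])
  also have "\<dots> = (\<Sum>k<R. \<Sum>l<R. GG R k l ^ n)"
    by (simp add: L1[where f = "\<lambda>j b. vv R k b * vv R l b" for k l, simplified] GG_def)
  finally show ?thesis .
qed

lemma rho_eq:
  assumes al: "\<alpha> \<subseteq> {..<n}" and a: "a \<subseteq> \<alpha>" and a': "a' \<subseteq> \<alpha>"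
  shows "(\<Sum>b\<in>Pow ({..<n} - \<alpha>). psi_unnorm R n (a \<union> b) * psi_unnorm R n (a' \<union> b)) =
         (\<Sum>k<R. \<Sum>l<R. \<Prod>j<n. if j \<in> \<alpha> then vv R k (j \<in> a) * vv R l (j \<in> a') else GG R k l)"
proof -
  define h where "h k l j \<beta> = (if j \<in> \<alpha> then vv R k (j \<in> a) * vv R l (j \<in> a') else vv R k \<beta> * vv R l \<beta>)" for k l j \<beta>
  have "(\<Sum>b\<in>Pow ({..<n} - \<alpha>). psi_unnorm R n (a \<union> b) * psi_unnorm R n (a' \<union> b)) =
        (\<Sum>b\<in>Pow ({..<n} - \<alpha>). \<Sum>k<R. \<Sum>l<R. \<Prod>j<n. h k l j (j \<in> b))"
  proof (rule sum.cong[OF refl])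
    fix b assume b: "b \<in> Pow ({..<n} - \<alpha>)"
    have "psi_unnorm R n (a \<union> b) * psi_unnorm R n (a' \<union> b) =
          (\<Sum>k<R. \<Sum>l<R. \<Prod>j<n. vv R k (j \<in> a \<union> b) * vv R l (j \<in> a' \<union> b))"
      by (simp add: psi_unnorm_vv sum_product prod.distrib)
    also have "\<dots> = (\<Sum>k<R. \<Sum>l<R. \<Prod>j<n. h k l j (j \<in> b))"
    proof (intro sum.cong refl prod.cong)
      fix k l j assume "j \<in> {..<n}"
      show "vv R k (j \<in> a \<union> b) * vv R l (j \<in> a' \<union> b) = h k l j (j \<in> b)"
      proof (cases "j \<in> \<alpha>")
        case True
        hence "j \<notin> b" using b by auto
        thus ?thesis using True by (simp add: h_def)
      next
        case False
        hence "j \<notin> a" "j \<notin> a'" using a a' by auto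
        thus ?thesis using False by (simp add: h_def)
      qed
    qed
    finally show "psi_unnorm R n (a \<union> b) * psi_unnorm R n (a' \<union> b) =
          (\<Sum>k<R. \<Sum>l<R. \<Prod>j<n. h k l j (j \<in> b))" .
  qed
  also have "\<dots> = (\<Sum>k<R. \<Sum>l<R. \<Sum>b\<in>Pow ({..<n} - \<alpha>). \<Prod>j<n. h k l j (j \<in> b))"
    by (simp add: sum.swap[of _ "Pow _"])
  also have "\<dots> = (\<Sum>k<R. \<Sum>l<R. \<Prod>j<n. if j \<in> {..<n} - \<alpha> then h k l j False + h k l j True else h k l j False)"
    by (simp add: L2)
  also have "\<dots> = (\<Sum>k<R. \<Sum>l<R. \<Prod>j<n. if j \<in> \<alpha> then vv R k (j \<in> a) * vv R l (j \<in> a') else GG R k l)"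
    by (intro sum.cong refl prod.cong) (auto simp: h_def GG_def)
  finally show ?thesis .
qed

definition rho :: "nat \<Rightarrow> nat \<Rightarrow> nat set \<Rightarrow> nat set \<Rightarrow> nat set \<Rightarrow> real" where
  "rho R n \<alpha> a a' = (\<Sum>k<R. \<Sum>l<R. \<Prod>j<n. if j \<in> \<alpha> then vv R k (j \<in> a) * vv R l (j \<in> a') else GG R k l)"

lemma E_eq:
  assumes al: "\<alpha> \<subseteq> {..<n}"
  shows "(\<Sum>a\<in>Pow \<alpha>. \<Sum>a'\<in>Pow \<alpha>. rho R n \<alpha> a a' * rho R n \<alpha> a' a) =
    (\<Sum>k<R. \<Sum>k'<R. \<Sum>l<R. \<Sum>l'<R. \<Prod>j<n. if j \<in> \<alpha> then GG R k l' * GG R l k' else GG R k l * GG R k' l')"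
proof -
  define h1 where "h1 k l k' l' a j \<beta> = (if j \<in> \<alpha> then (vv R k (j \<in> a) * vv R l' (j \<in> a)) * (vv R l \<beta> * vv R k' \<beta>)
      else GG R k l * GG R k' l')" for k l k' l' a j \<beta>
  define h2 where "h2 k l k' l' j \<beta> = (if j \<in> \<alpha> then (vv R k \<beta> * vv R l' \<beta>) * GG R l k'
      else GG R k l * GG R k' l')" for k l k' l' j \<beta>
  have fin: "finite \<alpha>" using al finite_subset by blast
  have "(\<Sum>a\<in>Pow \<alpha>. \<Sum>a'\<in>Pow \<alpha>. rho R n \<alpha> a a' * rho R n \<alpha> a' a) =
        (\<Sum>a\<in>Pow \<alpha>. \<Sum>a'\<in>Pow \<alpha>. \<Sum>k<R. \<Sum>k'<R. \<Sum>l<R. \<Sum>l'<R. \<Prod>j<n. h1 k l k' l' a j (j \<in> a'))"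
  proof (intro sum.cong refl)
    fix a a' assume "a \<in> Pow \<alpha>" "a' \<in> Pow \<alpha>"
    have "rho R n \<alpha> a a' * rho R n \<alpha> a' a = (\<Sum>k<R. \<Sum>k'<R. \<Sum>l<R. \<Sum>l'<R.
       (\<Prod>j<n. if j \<in> \<alpha> then vv R k (j \<in> a) * vv R l (j \<in> a') else GG R k l) *
       (\<Prod>j<n. if j \<in> \<alpha> then vv R k' (j \<in> a') * vv R l' (j \<in> a) else GG R k' l'))"
      by (simp add: rho_def sum_product)
    also have "\<dots> = (\<Sum>k<R. \<Sum>k'<R. \<Sum>l<R. \<Sum>l'<R. \<Prod>j<n. h1 k l k' l' a j (j \<in> a'))"
    proof (intro sum.cong refl)
      fix k k' l l'
      have "(\<Prod>j<n. if j \<in> \<alpha> then vv R k (j \<in> a) * vv R l (j \<in> a') else GG R k l) *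
         (\<Prod>j<n. if j \<in> \<alpha> then vv R k' (j \<in> a') * vv R l' (j \<in> a) else GG R k' l') =
         (\<Prod>j<n. (if j \<in> \<alpha> then vv R k (j \<in> a) * vv R l (j \<in> a') else GG R k l) *
         (if j \<in> \<alpha> then vv R k' (j \<in> a') * vv R l' (j \<in> a) else GG R k' l'))"
        by (rule prod.distrib[symmetric])
      also have "\<dots> = (\<Prod>j<n. h1 k l k' l' a j (j \<in> a'))"
      proof (rule prod.cong[OF refl])
        fix j
        show "(if j \<in> \<alpha> then vv R k (j \<in> a) * vv R l (j \<in> a') else GG R k l) *
         (if j \<in> \<alpha> then vv R k' (j \<in> a') * vv R l' (j \<in> a) else GG R k' l') = h1 k l k' l' a j (j \<in> a')"
          unfolding h1_def by (cases "j \<in> \<alpha>") (simp_all only: if_True if_False mult_ac)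
      qed
      finally show "(\<Prod>j<n. if j \<in> \<alpha> then vv R k (j \<in> a) * vv R l (j \<in> a') else GG R k l) *
         (\<Prod>j<n. if j \<in> \<alpha> then vv R k' (j \<in> a') * vv R l' (j \<in> a) else GG R k' l') =
         (\<Prod>j<n. h1 k l k' l' a j (j \<in> a'))" .
    qed
    finally show "rho R n \<alpha> a a' * rho R n \<alpha> a' a = (\<Sum>k<R. \<Sum>k'<R. \<Sum>l<R. \<Sum>l'<R. \<Prod>j<n. h1 k l k' l' a j (j \<in> a'))" .
  qed
  also have "\<dots> = (\<Sum>a\<in>Pow \<alpha>. \<Sum>k<R. \<Sum>k'<R. \<Sum>l<R. \<Sum>l'<R. \<Sum>a'\<in>Pow \<alpha>. \<Prod>j<n. h1 k l k' l' a j (j \<in> a'))"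
    by (intro sum.cong refl) (simp only: sum.swap[of _ "Pow \<alpha>"])
  also have "\<dots> = (\<Sum>a\<in>Pow \<alpha>. \<Sum>k<R. \<Sum>k'<R. \<Sum>l<R. \<Sum>l'<R. \<Prod>j<n. h2 k l k' l' j (j \<in> a))"
  proof (intro sum.cong refl)
    fix k l k' l' a assume "a \<in> Pow \<alpha>"
    have "(\<Sum>a'\<in>Pow \<alpha>. \<Prod>j<n. h1 k l k' l' a j (j \<in> a')) =
       (\<Prod>j<n. if j \<in> \<alpha> then h1 k l k' l' a j False + h1 k l k' l' a j True else h1 k l k' l' a j False)"
      using al by (simp add: L2)
    also have "\<dots> = (\<Prod>j<n. h2 k l k' l' j (j \<in> a))"
      by (intro prod.cong refl) (simp add: h1_def h2_def GG_def algebra_simps)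
    finally show "(\<Sum>a'\<in>Pow \<alpha>. \<Prod>j<n. h1 k l k' l' a j (j \<in> a')) = (\<Prod>j<n. h2 k l k' l' j (j \<in> a))" .
  qed
  also have "\<dots> = (\<Sum>k<R. \<Sum>k'<R. \<Sum>l<R. \<Sum>l'<R. \<Sum>a\<in>Pow \<alpha>. \<Prod>j<n. h2 k l k' l' j (j \<in> a))"
    by (simp only: sum.swap[of _ "Pow \<alpha>"])
  also have "\<dots> = (\<Sum>k<R. \<Sum>k'<R. \<Sum>l<R. \<Sum>l'<R. \<Prod>j<n. if j \<in> \<alpha> then GG R k l' * GG R l k' else GG R k l * GG R k' l')"
  proof (intro sum.cong refl)
    fix k l k' l'
    have "(\<Sum>a\<in>Pow \<alpha>. \<Prod>j<n. h2 k l k' l' j (j \<in> a)) =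
       (\<Prod>j<n. if j \<in> \<alpha> then h2 k l k' l' j False + h2 k l k' l' j True else h2 k l k' l' j False)"
      using al by (simp add: L2)
    also have "\<dots> = (\<Prod>j<n. if j \<in> \<alpha> then GG R k l' * GG R l k' else GG R k l * GG R k' l')"
      by (intro prod.cong refl) (simp add: h2_def GG_def algebra_simps)
    finally show "(\<Sum>a\<in>Pow \<alpha>. \<Prod>j<n. h2 k l k' l' j (j \<in> a)) = (\<Prod>j<n. if j \<in> \<alpha> then GG R k l' * GG R l k' else GG R k l * GG R k' l')" .
  qed
  finally show ?thesis .
qed

abbreviation SS :: "nat \<Rightarrow> nat \<Rightarrow> real" where
  "SS R n \<equiv> (\<Sum>x\<in>Pow {..<n}. (psi_unnorm R n x)\<^sup>2)"

lemma psiR_real: "psiR R n x = of_real (norm_const R n * psi_unnorm R n x)"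
  by (simp add: psiR_def)

lemma red_eq:
  assumes al: "\<alpha> \<subseteq> {..<n}" and a: "a \<subseteq> \<alpha>" and a': "a' \<subseteq> \<alpha>"
  shows "reduced_dm n (psiR R n) \<alpha> a a' = of_real ((norm_const R n)\<^sup>2 * rho R n \<alpha> a a')"
proof -
  have "reduced_dm n (psiR R n) \<alpha> a a' =
     of_real (\<Sum>b\<in>Pow ({..<n} - \<alpha>). (norm_const R n * psi_unnorm R n (a \<union> b)) * (norm_const R n * psi_unnorm R n (a' \<union> b)))"
    by (simp add: reduced_dm_def psiR_real)
  also have "(\<Sum>b\<in>Pow ({..<n} - \<alpha>). (norm_const R n * psi_unnorm R n (a \<union> b)) * (norm_const R n * psi_unnorm R n (a' \<union> b)))
     = (norm_const R n)\<^sup>2 * (\<Sum>b\<in>Pow ({..<n} - \<alpha>). psi_unnorm R n (a \<union> b) * psi_unnorm R n (a' \<union> b))"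
    by (simp add: sum_distrib_left power2_eq_square mult_ac)
  also have "\<dots> = (norm_const R n)\<^sup>2 * rho R n \<alpha> a a'"
    using rho_eq[OF al a a'] by (simp add: rho_def)
  finally show ?thesis .
qed

lemma K2: assumes "SS R n > 0" shows "(norm_const R n)\<^sup>2 * SS R n = 1"
  using assms by (simp add: norm_const_def power_divide)

lemma pur_eq:
  assumes S: "SS R n > 0" and al: "\<alpha> \<subseteq> {..<n}"
  shows "purity n (psiR R n) \<alpha> = of_real ((norm_const R n)^4 *
    (\<Sum>k<R. \<Sum>k'<R. \<Sum>l<R. \<Sum>l'<R. \<Prod>j<n. if j \<in> \<alpha> then GG R k l' * GG R l k' else GG R k l * GG R k' l'))"
proof -
  let ?K = "norm_const R n"
  have main: "(\<Sum>a\<in>Pow \<alpha>. \<Sum>a'\<in>Pow \<alpha>. reduced_dm n (psiR R n) \<alpha> a a' * reduced_dm n (psiR R n) \<alpha> a' a)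
     = of_real (?K^4 * (\<Sum>a\<in>Pow \<alpha>. \<Sum>a'\<in>Pow \<alpha>. rho R n \<alpha> a a' * rho R n \<alpha> a' a))"
  proof -
    have "(\<Sum>a\<in>Pow \<alpha>. \<Sum>a'\<in>Pow \<alpha>. reduced_dm n (psiR R n) \<alpha> a a' * reduced_dm n (psiR R n) \<alpha> a' a)
      = (\<Sum>a\<in>Pow \<alpha>. \<Sum>a'\<in>Pow \<alpha>. of_real (?K^4 * (rho R n \<alpha> a a' * rho R n \<alpha> a' a)))"
    proof (intro sum.cong refl)
      fix a a' assume "a \<in> Pow \<alpha>" "a' \<in> Pow \<alpha>"
      thus "reduced_dm n (psiR R n) \<alpha> a a' * reduced_dm n (psiR R n) \<alpha> a' a = of_real (?K^4 * (rho R n \<alpha> a a' * rho R n \<alpha> a' a))"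
        using al by (simp add: red_eq power2_eq_square power4_eq_xxxx mult_ac)
    qed
    also have "\<dots> = of_real (?K^4 * (\<Sum>a\<in>Pow \<alpha>. \<Sum>a'\<in>Pow \<alpha>. rho R n \<alpha> a a' * rho R n \<alpha> a' a))"
      by (simp add: sum_distrib_left)
    finally show ?thesis .
  qed
  show ?thesis
  proof (cases "\<alpha> = {}")
    case False
    thus ?thesis using main E_eq[OF al] by (simp add: purity_def)
  next
    case True
    have r0: "rho R n {} {} {} = SS R n"
      using rho_eq[of "{}" n "{}" "{}" R] by (simp add: rho_def power2_eq_square)
    have "(\<Sum>k<R. \<Sum>k'<R. \<Sum>l<R. \<Sum>l'<R. \<Prod>j<n. if j \<in> \<alpha> then GG R k l' * GG R l k' else GG R k l * GG R k' l')
       = SS R n * SS R n"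
      using E_eq[of "{}" n R] True r0 by simp
    hence "?K^4 * (\<Sum>k<R. \<Sum>k'<R. \<Sum>l<R. \<Sum>l'<R. \<Prod>j<n. if j \<in> \<alpha> then GG R k l' * GG R l k' else GG R k l * GG R k' l') = (?K\<^sup>2 * SS R n)\<^sup>2"
      by (simp add: power2_eq_square power4_eq_xxxx mult_ac)
    also have "\<dots> = 1" using K2[OF S] by simp
    finally show ?thesis using True by (simp add: purity_def)
  qed
qed

lemma conc_eq:
  assumes S: "SS R n > 0"
  shows "conc_ent n (psiR R n) = 1 -
    (\<Sum>k<R. \<Sum>k'<R. \<Sum>l<R. \<Sum>l'<R. ((GG R k l' * GG R l k' + GG R k l * GG R k' l') / 2) ^ n) / (SS R n)\<^sup>2"
proof -
  let ?K = "norm_const R n"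
  let ?A = "\<lambda>k k' l l'. GG R k l' * GG R l k'"
  let ?B = "\<lambda>k k' l l'. GG R k l * GG R k' l'"
  have "(\<Sum>\<alpha>\<in>Pow {..<n}. purity n (psiR R n) \<alpha>) =
     (\<Sum>\<alpha>\<in>Pow {..<n}. of_real (?K^4 * (\<Sum>k<R. \<Sum>k'<R. \<Sum>l<R. \<Sum>l'<R. \<Prod>j<n. if j \<in> \<alpha> then ?A k k' l l' else ?B k k' l l')))"
    by (intro sum.cong refl) (simp add: pur_eq[OF S])
  also have "\<dots> = of_real (?K^4 * (\<Sum>k<R. \<Sum>k'<R. \<Sum>l<R. \<Sum>l'<R. \<Sum>\<alpha>\<in>Pow {..<n}. \<Prod>j<n. if j \<in> \<alpha> then ?A k k' l l' else ?B k k' l l'))"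
  proof -
    have "(\<Sum>\<alpha>\<in>Pow {..<n}. complex_of_real (?K^4 * (\<Sum>k<R. \<Sum>k'<R. \<Sum>l<R. \<Sum>l'<R. \<Prod>j<n. if j \<in> \<alpha> then ?A k k' l l' else ?B k k' l l')))
      = complex_of_real (?K^4 * (\<Sum>\<alpha>\<in>Pow {..<n}. (\<Sum>k<R. \<Sum>k'<R. \<Sum>l<R. \<Sum>l'<R. \<Prod>j<n. if j \<in> \<alpha> then ?A k k' l l' else ?B k k' l l')))"
      by (simp only: sum_distrib_left of_real_sum)
    also have "\<dots> = complex_of_real (?K^4 * (\<Sum>k<R. \<Sum>k'<R. \<Sum>l<R. \<Sum>l'<R. \<Sum>\<alpha>\<in>Pow {..<n}. \<Prod>j<n. if j \<in> \<alpha> then ?A k k' l l' else ?B k k' l l'))"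
      by (simp only: sum.swap[of _ "Pow {..<n}"])
    finally show ?thesis .
  qed
  also have "\<dots> = of_real (?K^4 * (\<Sum>k<R. \<Sum>k'<R. \<Sum>l<R. \<Sum>l'<R. (?B k k' l l' + ?A k k' l l') ^ n))"
    using L1[of "{..<n}" "\<lambda>j b. if b then ?A k k' l l' else ?B k k' l l'" for k k' l l'] by simp
  finally have "Re (\<Sum>\<alpha>\<in>Pow {..<n}. purity n (psiR R n) \<alpha>) = ?K^4 * (\<Sum>k<R. \<Sum>k'<R. \<Sum>l<R. \<Sum>l'<R. (?B k k' l l' + ?A k k' l l') ^ n)"
    by simp
  moreover have "?K^4 = 1 / (SS R n)\<^sup>2"
    using K2[OF S] S by (simp add: power4_eq_xxxx power2_eq_square field_simps)
  ultimately have "conc_ent n (psiR R n) = 1 - (1 / 2^n) * ((1 / (SS R n)\<^sup>2) * (\<Sum>k<R. \<Sum>k'<R. \<Sum>l<R. \<Sum>l'<R. (?B k k' l l' + ?A k k' l l') ^ n))"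
    by (simp add: conc_ent_def)
  also have "\<dots> = 1 - (\<Sum>k<R. \<Sum>k'<R. \<Sum>l<R. \<Sum>l'<R. ((?A k k' l l' + ?B k k' l l') / 2) ^ n) / (SS R n)\<^sup>2"
    by (simp add: power_divide sum_divide_distrib add.commute mult.commute)
  finally show ?thesis .
qed

lemma vv_simp: "vv R k False = cos (pi * real k / real R)" "vv R k True = sin (pi * real k / real R)"
  by (simp_all add: vv_def Ry0_def)

lemma GG_eq: "GG R k l = cos (pi * real k / real R - pi * real l / real R)"
  by (simp add: GG_def vv_simp cos_diff)

lemma GG_abs_le: "\<bar>GG R k l\<bar> \<le> 1"
  by (simp add: GG_eq abs_cos_le_one)

lemma GG_self: "GG R k k = 1"
  by (simp add: GG_def vv_simp power2_eq_square[symmetric])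

lemma GG_lt:
  assumes "k < R" "l < R" "k \<noteq> l"
  shows "\<bar>GG R k l\<bar> < 1"
proof -
  define x where "x = pi * real k / real R - pi * real l / real R"
  have R0: "real R > 0" using assms by simp
  have "sin x \<noteq> 0"
  proof
    assume "sin x = 0"
    then obtain i :: int where i: "x = of_int i * pi" by (auto simp: sin_zero_iff_int2)
    have "pi * ((real k - real l) / real R) = x" unfolding x_def by (simp add: right_diff_distrib diff_divide_distrib)
    hence "pi * ((real k - real l) / real R) = pi * of_int i" using i by simp
    hence "(real k - real l) / real R = of_int i" by (metis mult_left_cancel pi_neq_zero)
    hence e: "real k - real l = of_int i * real R" using R0 by (simp add: field_simps)
    have "\<bar>real k - real l\<bar> < real R" using assms by auto
    hence "\<bar>of_int i\<bar> * real R < 1 * real R" using e by (simp add: abs_mult)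
    hence "\<bar>of_int i :: real\<bar> < 1" using R0 by (simp only: mult_less_cancel_right)
    hence "i = 0" by linarith
    hence "real k = real l" using e by simp
    thus False using assms by simp
  qed
  hence "(cos x)\<^sup>2 < 1" using sin_cos_squared_add[of x] by (simp add: power2_eq_square) (smt (verit) zero_less_mult_iff not_square_less_zero)
  hence "\<bar>cos x\<bar> < 1" by (simp add: abs_square_less_1)
  thus ?thesis by (simp add: GG_eq x_def)
qed

lemma abs_mult_lt1: "\<bar>a::real\<bar> < 1 \<Longrightarrow> \<bar>b\<bar> \<le> 1 \<Longrightarrow> \<bar>a * b\<bar> < 1"
  using mult_left_le[of "\<bar>b\<bar>" "\<bar>a\<bar>"] by (simp add: abs_mult)

lemma S_lim: assumes "R > 0" shows "(\<lambda>n. SS R n) \<longlonglongrightarrow> real R"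
proof -
  have "(\<lambda>n. \<Sum>k<R. \<Sum>l<R. GG R k l ^ n) \<longlonglongrightarrow> (\<Sum>k<R. \<Sum>l<R. if l = k then 1 else 0)"
  proof (intro tendsto_sum)
    fix k l assume "k \<in> {..<R}" "l \<in> {..<R}"
    show "(\<lambda>n. GG R k l ^ n) \<longlonglongrightarrow> (if l = k then 1 else 0)"
    proof (cases "l = k")
      case True thus ?thesis by (simp add: GG_self)
    next
      case False
      thus ?thesis using GG_lt[of k R l] \<open>k \<in> _\<close> \<open>l \<in> _\<close> by (simp add: LIMSEQ_abs_realpow_zero2)
    qed
  qed
  thus ?thesis by (simp add: norm_sum)
qed

definition qq :: "nat \<Rightarrow> nat \<Rightarrow> nat \<Rightarrow> nat \<Rightarrow> nat \<Rightarrow> real" where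
  "qq R k k' l l' = (GG R k l' * GG R l k' + GG R k l * GG R k' l') / 2"

lemma qq_lim:
  assumes "k < R" "k' < R" "l < R" "l' < R"
  shows "(\<lambda>n. qq R k k' l l' ^ n) \<longlonglongrightarrow> (if k' = k \<and> l = k \<and> l' = k then 1 else 0)"
proof (cases "k' = k \<and> l = k \<and> l' = k")
  case True thus ?thesis by (simp add: qq_def GG_self)
next
  case False
  have b: "\<bar>GG R a b\<bar> \<le> 1" for a b by (rule GG_abs_le)
  have disj: "\<bar>GG R k l' * GG R l k'\<bar> < 1 \<or> \<bar>GG R k l * GG R k' l'\<bar> < 1"
  proof (cases "k = l'")
    case False thus ?thesis using GG_lt[of k R l'] assms abs_mult_lt1 b by blast
  next
    case kl': True
    show ?thesis
    proof (cases "l = k'")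
      case False thus ?thesis using GG_lt[of l R k'] assms abs_mult_lt1 b by (metis mult.commute)
    next
      case True
      hence "k \<noteq> l" using False kl' by auto
      thus ?thesis using GG_lt[of k R l] assms abs_mult_lt1 b by blast
    qed
  qed
  have le: "\<bar>GG R k l' * GG R l k'\<bar> \<le> 1" "\<bar>GG R k l * GG R k' l'\<bar> \<le> 1"
    using b by (simp_all add: abs_mult mult_le_one)
  from disj have s2: "\<bar>GG R k l' * GG R l k'\<bar> + \<bar>GG R k l * GG R k' l'\<bar> < 2"
  proof
    assume "\<bar>GG R k l' * GG R l k'\<bar> < 1" thus ?thesis using le by linarith
  next
    assume "\<bar>GG R k l * GG R k' l'\<bar> < 1" thus ?thesis using le by linarith
  qed
  moreover have "\<bar>GG R k l' * GG R l k' + GG R k l * GG R k' l'\<bar> \<le> \<bar>GG R k l' * GG R l k'\<bar> + \<bar>GG R k l * GG R k' l'\<bar>"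
    by (rule abs_triangle_ineq)
  moreover have "\<bar>qq R k k' l l'\<bar> = \<bar>GG R k l' * GG R l k' + GG R k l * GG R k' l'\<bar> / 2"
    by (simp add: qq_def)
  ultimately have "\<bar>qq R k k' l l'\<bar> < 1" using s2 by linarith
  hence "(\<lambda>n. qq R k k' l l' ^ n) \<longlonglongrightarrow> 0" by (rule LIMSEQ_abs_realpow_zero2)
  thus ?thesis using False by (simp only: if_False)
qed

lemma T_lim: assumes "R > 0"
  shows "(\<lambda>n. \<Sum>k<R. \<Sum>k'<R. \<Sum>l<R. \<Sum>l'<R. qq R k k' l l' ^ n) \<longlonglongrightarrow> real R"
proof -
  have "(\<lambda>n. \<Sum>k<R. \<Sum>k'<R. \<Sum>l<R. \<Sum>l'<R. qq R k k' l l' ^ n) \<longlonglongrightarrow>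
     (\<Sum>k<R. \<Sum>k'<R. \<Sum>l<R. \<Sum>l'<R. if k' = k \<and> l = k \<and> l' = k then 1 else 0)"
    by (intro tendsto_sum qq_lim) auto
  moreover have "(\<Sum>k<R. \<Sum>k'<R. \<Sum>l<R. \<Sum>l'<R. if k' = k \<and> l = k \<and> l' = k then 1 else 0) = (real R)"
  proof -
    have "(\<Sum>l'<R. if k' = k \<and> l = k \<and> l' = k then 1 else 0) = (if k' = k \<and> l = k then 1 else (0::real))"
      if "k < R" for k k' l
    proof (cases "k' = k \<and> l = k")
      case True thus ?thesis using that by (simp add: sum.delta)
    next
      case False
      hence "\<forall>l'\<in>{..<R}. (if k' = k \<and> l = k \<and> l' = k then 1 else 0) = (0::real)" by auto
      thus ?thesis using False by (simp add: sum.neutral)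
    qed
    moreover have "(\<Sum>l<R. if k' = k \<and> l = k then 1 else 0) = (if k' = k then 1 else (0::real))"
      if "k < R" for k k'
    proof (cases "k' = k")
      case True thus ?thesis using that by (simp add: sum.delta)
    next
      case False
      hence "\<forall>l\<in>{..<R}. (if k' = k \<and> l = k then 1 else 0) = (0::real)" by auto
      thus ?thesis using False by (simp add: sum.neutral)
    qed
    ultimately show ?thesis by (simp add: sum.delta)
  qed
  ultimately show ?thesis by simp
qed

lemma conc_lim:
  assumes "R \<ge> 2"
  shows "((\<lambda>n. conc_ent n (psiR R n)) \<longlongrightarrow> (real R - 1) / real R) sequentially"
proof -
  have R0: "R > 0" using assms by simp
  have ev: "eventually (\<lambda>n. SS R n > 0) sequentially"
    using order_tendstoD(1)[OF S_lim[OF R0], of 0] R0 by simp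
  have "(\<lambda>n. 1 - (\<Sum>k<R. \<Sum>k'<R. \<Sum>l<R. \<Sum>l'<R. qq R k k' l l' ^ n) / (SS R n)\<^sup>2) \<longlonglongrightarrow> 1 - real R / (real R)\<^sup>2"
    by (intro tendsto_intros T_lim S_lim R0) (use R0 in simp)
  also have "1 - real R / (real R)\<^sup>2 = (real R - 1) / real R"
    using R0 by (simp add: field_simps power2_eq_square)
  finally have lim: "(\<lambda>n. 1 - (\<Sum>k<R. \<Sum>k'<R. \<Sum>l<R. \<Sum>l'<R. qq R k k' l l' ^ n) / (SS R n)\<^sup>2) \<longlonglongrightarrow> (real R - 1) / real R" .
  have "eventually (\<lambda>n. 1 - (\<Sum>k<R. \<Sum>k'<R. \<Sum>l<R. \<Sum>l'<R. qq R k k' l l' ^ n) / (SS R n)\<^sup>2 = conc_ent n (psiR R n)) sequentially"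
    using ev by eventually_elim (simp add: conc_eq qq_def)
  thus ?thesis using lim by (rule Lim_transform_eventually[rotated])
qed

definition om :: "bool \<Rightarrow> bool \<Rightarrow> complex" where
  "om p b = (if b then (if p then \<i> else - \<i>) else 1)"

definition PP :: "nat \<Rightarrow> nat \<Rightarrow> nat \<Rightarrow> nat \<Rightarrow> bool" where
  "PP R s t j = (if j < R - 1 then j < s else j < R - 1 + t)"

definition NN :: "nat \<Rightarrow> nat \<Rightarrow> (nat set \<Rightarrow> complex) \<Rightarrow> nat \<Rightarrow> nat \<Rightarrow> complex" where
  "NN R n \<psi> s t = (\<Sum>x\<in>Pow {..<n}. (\<Prod>j<n. om (PP R s t j) (j \<in> x)) * \<psi> x)"

lemma NN_decomp:
  assumes h: "\<forall>x\<in>Pow {..<n}. \<psi> x = (\<Sum>i<r. c i * (\<Prod>j<n. \<phi> i j (j \<in> x)))"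
    and mn: "R - 1 \<le> n"
  shows "NN R n \<psi> s t = (\<Sum>i<r.
     (c i * (\<Prod>j<R - 1. om (j < s) False * \<phi> i j False + om (j < s) True * \<phi> i j True)) *
     (\<Prod>j\<in>{R - 1..<n}. om (j < R - 1 + t) False * \<phi> i j False + om (j < R - 1 + t) True * \<phi> i j True))"
proof -
  let ?f = "\<lambda>i j b. om (PP R s t j) b * \<phi> i j b"
  have "NN R n \<psi> s t = (\<Sum>x\<in>Pow {..<n}. \<Sum>i<r. c i * (\<Prod>j<n. ?f i j (j \<in> x)))"
    unfolding NN_def
  proof (intro sum.cong refl)
    fix x assume "x \<in> Pow {..<n}"
    hence "\<psi> x = (\<Sum>i<r. c i * (\<Prod>j<n. \<phi> i j (j \<in> x)))" using h by blast
    thus "(\<Prod>j<n. om (PP R s t j) (j \<in> x)) * \<psi> x = (\<Sum>i<r. c i * (\<Prod>j<n. ?f i j (j \<in> x)))"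
      by (simp add: sum_distrib_left prod.distrib mult_ac)
  qed
  also have "\<dots> = (\<Sum>i<r. c i * (\<Sum>x\<in>Pow {..<n}. \<Prod>j<n. ?f i j (j \<in> x)))"
    by (simp add: sum.swap[of _ "Pow _"] sum_distrib_left)
  also have "\<dots> = (\<Sum>i<r. c i * (\<Prod>j<n. ?f i j False + ?f i j True))"
  proof (intro sum.cong refl)
    fix i show "c i * (\<Sum>x\<in>Pow {..<n}. \<Prod>j<n. ?f i j (j \<in> x)) = c i * (\<Prod>j<n. ?f i j False + ?f i j True)"
      using L1[of "{..<n}" "?f i"] by simp
  qed
  also have "\<dots> = (\<Sum>i<r.
     (c i * (\<Prod>j<R - 1. om (j < s) False * \<phi> i j False + om (j < s) True * \<phi> i j True)) *
     (\<Prod>j\<in>{R - 1..<n}. om (j < R - 1 + t) False * \<phi> i j False + om (j < R - 1 + t) True * \<phi> i j True))"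
  proof (intro sum.cong refl)
    fix i
    have "(\<Prod>j<n. ?f i j False + ?f i j True) = (\<Prod>j\<in>{0..<R-1}. ?f i j False + ?f i j True) * (\<Prod>j\<in>{R-1..<n}. ?f i j False + ?f i j True)"
      using mn by (simp add: prod.atLeastLessThan_concat lessThan_atLeast0)
    also have "(\<Prod>j\<in>{0..<R-1}. ?f i j False + ?f i j True) = (\<Prod>j<R - 1. om (j < s) False * \<phi> i j False + om (j < s) True * \<phi> i j True)"
      by (simp add: lessThan_atLeast0 PP_def)
    also have "(\<Prod>j\<in>{R-1..<n}. ?f i j False + ?f i j True) = (\<Prod>j\<in>{R - 1..<n}. om (j < R - 1 + t) False * \<phi> i j False + om (j < R - 1 + t) True * \<phi> i j True)"
      by (intro prod.cong refl) (simp add: PP_def)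
    finally show "c i * (\<Prod>j<n. ?f i j False + ?f i j True) = (c i * (\<Prod>j<R - 1. om (j < s) False * \<phi> i j False + om (j < s) True * \<phi> i j True)) *
     (\<Prod>j\<in>{R - 1..<n}. om (j < R - 1 + t) False * \<phi> i j False + om (j < R - 1 + t) True * \<phi> i j True)"
      by (simp add: mult_ac)
  qed
  finally show ?thesis .
qed

definition zz :: "nat \<Rightarrow> nat \<Rightarrow> complex" where "zz R k = cis (pi * real k / real R)"
definition yy :: "nat \<Rightarrow> nat \<Rightarrow> complex" where "yy R k = cis (2 * pi * real k / real R)"

lemma zz_sq: "(zz R k)^2 = yy R k"
proof -
  have "cis (pi * real k / real R) ^ 2 = cis (real 2 * (pi * real k / real R))" by (rule Complex.DeMoivre)
  thus ?thesis by (simp add: zz_def yy_def mult.assoc)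
qed

lemma card_PP:
  assumes "s < R" "R - 1 + t \<le> n"
  shows "card ({..<n} \<inter> {j. PP R s t j}) = s + t"
proof -
  have "{..<n} \<inter> {j. PP R s t j} = {..<s} \<union> {R - 1..<R - 1 + t}"
    using assms by (auto simp: PP_def)
  moreover have "{..<s} \<inter> {R - 1..<R - 1 + t} = {}" using assms by auto
  ultimately show ?thesis by (simp add: card_Un_disjoint)
qed

lemma NN_eval:
  assumes "s < R" "R - 1 + t \<le> n"
  shows "NN R n (psiR R n) s t = of_real (norm_const R n) *
     (\<Sum>k<R. inverse (zz R k) ^ n * yy R k ^ s * yy R k ^ t)"
proof -
  let ?K = "complex_of_real (norm_const R n)"
  let ?f = "\<lambda>k j b. om (PP R s t j) b * complex_of_real (vv R k b)"
  have ps: "psiR R n x = ?K * (\<Sum>k<R. \<Prod>j<n. complex_of_real (vv R k (j \<in> x)))" for x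
    by (simp add: psiR_real psi_unnorm_vv)
  have "NN R n (psiR R n) s t = (\<Sum>x\<in>Pow {..<n}. \<Sum>k<R. ?K * (\<Prod>j<n. ?f k j (j \<in> x)))"
    unfolding NN_def ps by (intro sum.cong refl) (simp add: sum_distrib_left prod.distrib mult_ac)
  also have "\<dots> = ?K * (\<Sum>k<R. \<Sum>x\<in>Pow {..<n}. \<Prod>j<n. ?f k j (j \<in> x))"
    by (simp add: sum.swap[of _ "Pow _"] sum_distrib_left)
  also have "\<dots> = ?K * (\<Sum>k<R. \<Prod>j<n. ?f k j False + ?f k j True)"
  proof (intro arg_cong[where f = "\<lambda>u. ?K * u"] sum.cong refl)
    fix k show "(\<Sum>x\<in>Pow {..<n}. \<Prod>j<n. ?f k j (j \<in> x)) = (\<Prod>j<n. ?f k j False + ?f k j True)"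
      using L1[of "{..<n}" "?f k"] by simp
  qed
  also have "\<dots> = ?K * (\<Sum>k<R. inverse (zz R k) ^ n * yy R k ^ s * yy R k ^ t)"
  proof (intro arg_cong[where f = "\<lambda>u. ?K * u"] sum.cong refl)
    fix k
    have z0: "zz R k \<noteq> 0" by (simp add: zz_def)
    have fac: "?f k j False + ?f k j True = (if PP R s t j then yy R k else 1) * inverse (zz R k)" for j
    proof -
      have "?f k j False + ?f k j True = (if PP R s t j then zz R k else inverse (zz R k))"
        by (simp add: om_def vv_simp zz_def complex_eq_iff)
      also have "\<dots> = (if PP R s t j then yy R k else 1) * inverse (zz R k)"
        using z0 by (simp add: zz_sq[symmetric] power2_eq_square)
      finally show ?thesis .
    qed
    have "(\<Prod>j<n. ?f k j False + ?f k j True) = (\<Prod>j<n. if PP R s t j then yy R k else 1) * inverse (zz R k) ^ n"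
      by (simp add: fac prod.distrib)
    also have "(\<Prod>j<n. if PP R s t j then yy R k else 1) = yy R k ^ (s + t)"
      by (simp add: prod.If_cases card_PP[OF assms])
    finally show "(\<Prod>j<n. ?f k j False + ?f k j True) = inverse (zz R k) ^ n * yy R k ^ s * yy R k ^ t"
      by (simp add: power_add mult_ac)
  qed
  finally show ?thesis .
qed

lemma yy_root: assumes "R > 0" shows "yy R k ^ R = 1"
proof -
  have "yy R k ^ R = cis (real R * (2 * pi * real k / real R))" unfolding yy_def by (rule Complex.DeMoivre)
  also have "real R * (2 * pi * real k / real R) = 2 * pi * real k" using assms by simp
  also have "cis (2 * pi * real k) = 1" by (rule cis_multiple_2pi) simp
  finally show ?thesis .
qed

lemma yy_inj: assumes "R > 0" "k < R" "l < R" "yy R k = yy R l" shows "k = l"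
proof -
  have "inj_on (\<lambda>k. cis (2 * pi * real k / real R)) {..<R}"
    using Complex.bij_betw_roots_unity[OF assms(1)] by (rule bij_betw_imp_inj_on)
  thus ?thesis by (rule inj_onD) (use assms(2-4) in \<open>simp_all add: yy_def\<close>)
qed

lemma orth:
  assumes R: "R > 0" and "k < R" "l < R"
  shows "(\<Sum>s<R. cnj (yy R k) ^ s * yy R l ^ s) = (if k = l then of_nat R else 0)"
proof -
  have cy: "cnj (yy R k) = inverse (yy R k)" by (simp add: yy_def cis_cnj)
  define w where "w = cnj (yy R k) * yy R l"
  have "(\<Sum>s<R. cnj (yy R k) ^ s * yy R l ^ s) = (\<Sum>s<R. w ^ s)"
    by (simp add: w_def power_mult_distrib)
  also have "\<dots> = (if k = l then of_nat R else 0)"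
  proof (cases "k = l")
    case True
    have y0: "yy R k \<noteq> 0" by (simp add: yy_def)
    have "w = inverse (yy R k) * yy R l" by (simp only: w_def cy)
    also have "\<dots> = inverse (yy R k) * yy R k" by (simp only: True)
    also have "\<dots> = 1" using y0 by (rule left_inverse)
    finally have w1: "w = 1" .
    show ?thesis by (simp only: w1 True power_one sum_constant if_True) simp
  next
    case False
    have wn1: "w \<noteq> 1"
    proof
      assume "w = 1"
      hence w1: "inverse (yy R k) * yy R l = 1" by (simp only: w_def cy)
      have y0: "yy R k \<noteq> 0" by (simp add: yy_def)
      have "yy R k * (inverse (yy R k) * yy R l) = (yy R k * inverse (yy R k)) * yy R l" by (rule mult.assoc[symmetric])
      also have "yy R k * inverse (yy R k) = 1" using y0 by (rule right_inverse)
      finally have "yy R l = yy R k * (inverse (yy R k) * yy R l)" by simp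
      hence "yy R l = yy R k" by (simp only: w1 mult_1_right)
      thus False using yy_inj[OF R assms(3,2)] False by simp
    qed
    have wR: "w ^ R = 1"
    proof -
      have "w ^ R = inverse (yy R k) ^ R * yy R l ^ R" by (simp only: w_def cy power_mult_distrib)
      also have "inverse (yy R k) ^ R = inverse (yy R k ^ R)" by (rule power_inverse)
      finally show ?thesis by (simp only: yy_root[OF R] inverse_1 mult_1)
    qed
    have "(\<Sum>s<R. w ^ s) = (w ^ R - 1) / (w - 1)" by (rule geometric_sum[OF wn1])
    also have "\<dots> = 0" by (simp only: wR diff_self div_0)
    finally show ?thesis using False by simp
  qed
  finally show ?thesis .
qed

lemma rank_bound:
  fixes F G :: "nat \<Rightarrow> nat \<Rightarrow> complex"
  assumes h: "\<forall>k<R. \<forall>l<R. (\<Sum>i<r. F k i * G l i) = (if k = l then 1 else 0)"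
  shows "R \<le> r"
proof (rule ccontr)
  assume "\<not> R \<le> r" hence rR: "r < R" by simp
  define A where "A = mat R R (\<lambda>(k,i). if i < r then F k i else 0)"
  define B where "B = mat R R (\<lambda>(i,l). if i < r then G l i else 0)"
  have A: "A \<in> carrier_mat R R" and B: "B \<in> carrier_mat R R" by (auto simp: A_def B_def)
  have AB: "A * B = 1\<^sub>m R"
  proof (rule eq_matI)
    fix k l assume kl: "k < dim_row (1\<^sub>m R)" "l < dim_col (1\<^sub>m R)"
    have "(A * B) $$ (k, l) = (\<Sum>i\<in>{0..<R}. A $$ (k,i) * B $$ (i,l))"
      using kl A B by (simp add: scalar_prod_def)
    also have "\<dots> = (\<Sum>i\<in>{0..<R}. if i < r then F k i * G l i else 0)"
      using kl by (intro sum.cong) (auto simp: A_def B_def)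
    also have "\<dots> = (\<Sum>i\<in>{0..<R} \<inter> {i. i < r}. F k i * G l i)"
      by (simp add: sum.inter_restrict)
    also have "{0..<R} \<inter> {i. i < r} = {..<r}" using rR by auto
    also have "(\<Sum>i<r. F k i * G l i) = 1\<^sub>m R $$ (k, l)" using h kl by simp
    finally show "(A * B) $$ (k, l) = 1\<^sub>m R $$ (k, l)" .
  qed (use A B in auto)
  have "B = mat\<^sub>r R R (\<lambda>i. if i = r then 0\<^sub>v R else row B i)"
    by (rule eq_matI) (auto simp: B_def)
  moreover have "det (mat\<^sub>r R R (\<lambda>i. if i = r then 0\<^sub>v R else row B i)) = 0"
    by (rule det_row_0) (use rR B in auto)
  ultimately have "det B = 0" by simp
  hence "det (A * B) = 0" using det_mult[OF A B] by simp
  thus False using AB by simp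
qed

lemma swap3: "(\<Sum>s\<in>A. \<Sum>t\<in>B. \<Sum>m\<in>C. g s t m) = (\<Sum>m\<in>C. \<Sum>s\<in>A. \<Sum>t\<in>B. g s t m)"
proof -
  have "(\<Sum>s\<in>A. \<Sum>t\<in>B. \<Sum>m\<in>C. g s t m) = (\<Sum>s\<in>A. \<Sum>m\<in>C. \<Sum>t\<in>B. g s t m)"
    by (rule sum.cong[OF refl], rule sum.swap)
  also have "\<dots> = (\<Sum>m\<in>C. \<Sum>s\<in>A. \<Sum>t\<in>B. g s t m)" by (rule sum.swap)
  finally show ?thesis .
qed

lemma rank_lower:
  assumes R2: "R \<ge> 2" and n: "2 * R \<le> n" and S: "SS R n > 0"
    and dec: "has_cp_decomp n (psiR R n) r"
  shows "R \<le> r"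
proof -
  have R0: "R > 0" using R2 by simp
  obtain c \<phi> where h: "\<forall>x\<in>Pow {..<n}. psiR R n x = (\<Sum>i<r. c i * (\<Prod>j<n. \<phi> i j (j \<in> x)))"
    using dec unfolding has_cp_decomp_def by blast
  define Fm where "Fm s i = c i * (\<Prod>j<R - 1. om (j < s) False * \<phi> i j False + om (j < s) True * \<phi> i j True)" for s i
  define Gm where "Gm t i = (\<Prod>j\<in>{R - 1..<n}. om (j < R - 1 + t) False * \<phi> i j False + om (j < R - 1 + t) True * \<phi> i j True)" for t i
  have dec2: "NN R n (psiR R n) s t = (\<Sum>i<r. Fm s i * Gm t i)" for s t
    unfolding Fm_def Gm_def by (rule NN_decomp[OF h]) (use n in simp)
  define K where "K = complex_of_real (norm_const R n)"
  have K0: "K \<noteq> 0" using S by (simp add: K_def norm_const_def)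
  define pp where "pp k s = cnj (yy R k) ^ s" for k s
  define dd where "dd k = inverse (zz R k) ^ n" for k
  have dd0: "dd k \<noteq> 0" for k by (simp add: dd_def zz_def)
  have ev: "NN R n (psiR R n) s t = K * (\<Sum>m<R. dd m * yy R m ^ s * yy R m ^ t)" if "s < R" "t < R" for s t
    unfolding K_def dd_def by (rule NN_eval) (use that n in simp_all)
  define M where "M k l = (\<Sum>s<R. \<Sum>t<R. pp k s * pp l t * NN R n (psiR R n) s t)" for k l
  have M1: "M k l = (if k = l then K * dd k * of_nat R * of_nat R else 0)" if kl: "k < R" "l < R" for k l
  proof -
    have "M k l = (\<Sum>s<R. \<Sum>t<R. \<Sum>m<R. K * dd m * (pp k s * yy R m ^ s) * (pp l t * yy R m ^ t))"
      unfolding M_def by (intro sum.cong refl) (simp add: ev sum_distrib_left mult_ac)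
    also have "\<dots> = (\<Sum>m<R. \<Sum>s<R. \<Sum>t<R. K * dd m * (pp k s * yy R m ^ s) * (pp l t * yy R m ^ t))"
      by (rule swap3)
    also have "\<dots> = (\<Sum>m<R. K * dd m * (\<Sum>s<R. pp k s * yy R m ^ s) * (\<Sum>t<R. pp l t * yy R m ^ t))"
      by (intro sum.cong refl) (simp add: sum_product sum_distrib_left mult_ac)
    also have "\<dots> = (\<Sum>m<R. K * dd m * (if k = m then of_nat R else 0) * (if l = m then of_nat R else 0))"
      by (intro sum.cong refl) (simp add: pp_def orth[OF R0 kl(1)] orth[OF R0 kl(2)])
    also have "\<dots> = (if k = l then K * dd k * of_nat R * of_nat R else 0)"
    proof (cases "k = l")
      case True
      have "(\<Sum>m<R. K * dd m * (if k = m then of_nat R else 0) * (if l = m then of_nat R else 0)) =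
        (\<Sum>m<R. if l = m then K * dd m * of_nat R * of_nat R else 0)"
        by (intro sum.cong refl) (simp add: True)
      thus ?thesis using True kl by (simp add: sum.delta sum.delta')
    next
      case False
      have "\<forall>m\<in>{..<R}. K * dd m * (if k = m then of_nat R else 0) * (if l = m then of_nat R else 0) = (0::complex)"
        using False by auto
      thus ?thesis using False by (simp add: sum.neutral)
    qed
    finally show ?thesis .
  qed
  have M2: "M k l = (\<Sum>i<r. (\<Sum>s<R. pp k s * Fm s i) * (\<Sum>t<R. pp l t * Gm t i))" for k l
  proof -
    have "M k l = (\<Sum>s<R. \<Sum>t<R. \<Sum>i<r. (pp k s * Fm s i) * (pp l t * Gm t i))"
      unfolding M_def by (intro sum.cong refl) (simp add: dec2 sum_distrib_left mult_ac)
    also have "\<dots> = (\<Sum>i<r. \<Sum>s<R. \<Sum>t<R. (pp k s * Fm s i) * (pp l t * Gm t i))"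
      by (rule swap3)
    also have "\<dots> = (\<Sum>i<r. (\<Sum>s<R. pp k s * Fm s i) * (\<Sum>t<R. pp l t * Gm t i))"
      by (simp add: sum_product)
    finally show ?thesis .
  qed
  define F' where "F' k i = (\<Sum>s<R. pp k s * Fm s i) / (K * dd k * of_nat R * of_nat R)" for k i
  define G' where "G' l i = (\<Sum>t<R. pp l t * Gm t i)" for l i
  have "\<forall>k<R. \<forall>l<R. (\<Sum>i<r. F' k i * G' l i) = (if k = l then 1 else 0)"
  proof (intro allI impI)
    fix k l assume kl: "k < R" "l < R"
    have nz: "K * dd k * of_nat R * of_nat R \<noteq> 0" using K0 dd0 R0 by simp
    have "(\<Sum>i<r. F' k i * G' l i) = (\<Sum>i<r. (\<Sum>s<R. pp k s * Fm s i) * (\<Sum>t<R. pp l t * Gm t i) / (K * dd k * of_nat R * of_nat R))"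
      by (intro sum.cong refl) (simp add: F'_def G'_def)
    also have "\<dots> = M k l / (K * dd k * of_nat R * of_nat R)"
      by (simp only: M2 sum_divide_distrib)
    also have "\<dots> = (if k = l then 1 else 0)" using M1[OF kl] nz dd0[of l] by simp
    finally show "(\<Sum>i<r. F' k i * G' l i) = (if k = l then 1 else 0)" .
  qed
  thus ?thesis by (rule rank_bound)
qed

lemma rank_upper: "has_cp_decomp n (psiR R n) R"
  unfolding has_cp_decomp_def
proof (intro exI ballI)
  fix x
  show "psiR R n x = (\<Sum>i<R. complex_of_real (norm_const R n) * (\<Prod>j<n. complex_of_real (vv R i (j \<in> x))))"
    by (simp add: psiR_real psi_unnorm_vv sum_distrib_left)
qed

theorem mainTheorem7:
  fixes R :: nat
  assumes "R \<ge> 2"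
  shows "((\<lambda>n. conc_ent n (psiR R n)) \<longlongrightarrow> (real R - 1) / real R) sequentially
         \<and> (\<exists>n0. \<forall>n\<ge>n0. cp_rank n (psiR R n) = R)"
proof
  show "((\<lambda>n. conc_ent n (psiR R n)) \<longlongrightarrow> (real R - 1) / real R) sequentially"
    by (rule conc_lim[OF assms])
  have R0: "R > 0" using assms by simp
  have "eventually (\<lambda>n. SS R n > 0) sequentially"
    using order_tendstoD(1)[OF S_lim[OF R0], of 0] R0 by simp
  then obtain N1 where N1: "\<And>n. n \<ge> N1 \<Longrightarrow> SS R n > 0" by (auto simp: eventually_sequentially)
  show "\<exists>n0. \<forall>n\<ge>n0. cp_rank n (psiR R n) = R"
  proof (intro exI allI impI)
    fix n assume "max N1 (2 * R) \<le> n"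
    hence n: "2 * R \<le> n" and S: "SS R n > 0" using N1 by auto
    show "cp_rank n (psiR R n) = R"
      unfolding cp_rank_def
    proof (rule Least_equality)
      show "has_cp_decomp n (psiR R n) R" by (rule rank_upper)
      show "\<And>y. has_cp_decomp n (psiR R n) y \<Longrightarrow> R \<le> y"
        by (rule rank_lower[OF assms n S])
    qed
  qed
qed

end
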